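(* Let $X$, $Y$ be topological spaces, $F\subset X\times Y$ a subspace, and $p\colon F\to X$, $q\colon F\to Y$ the canonical projections. Let $H$ denote homology with coefficients in a field $K$, and assume $HX$, $HF$, $HY$ are finite dimensional. Let $$h=(h_X,h_F,h_Y)\colon \bigl(HX \xleftarrow{p_*} HF \xrightarrow{q_*} HY\bigr)\xrightarrow{\ \cong\ } \bigoplus_{1\le b\le d\le 3}\mathbb{I}[b,d]^{m_{b,d}}$$ be any isomorphism of representations of the quiver $\circ\leftarrow\circ\rightarrow\circ$ onto a direct sum of interval representations. Let $\pi_X$ be the projection of the vertex-1 space of $\bigoplus\mathbb{I}[b,d]^{m_{b,d}}$ onto the vertex-1 space of the summand $\mathbb{I}[1,3]^{m_{1,3}}$ (a copy of $K^{m_{1,3}}$), and $\iota_Y$ the inclusion of the vertex-3 space of $\mathbb{I}[1,3]^{m_{1,3}}$ (again $K^{m_{1,3}}$) into the vertex-3 space of $\bigoplus\mathbb{I}[b,d]^{m_{b,d}}$; identify these two copies of $K^{m_{1,3}}$ via the identity maps of $\mathbb{I}[1,3]$. Define $F_*:=h_Y^{-1}\circ\iota_Y\circ\pi_X\circ h_X\colon HX\to HY$. If $p_*$ is surjective ($\operatorname{Im}p_*=HX$) and $q_*(\operatorname{Ker}p_* )=0$, then $F_*=q_*\circ p_*^{-1}$, where $q_*\circ p_*^{-1}$ denotes the well-defined linear map sending $p_*(z)$ to $q_*(z)$.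
   Context: For a field $K$, the interval representation $\mathbb{I}[b,d]$ ($1\le b\le d\le 3$) of the quiver $1\leftarrow 2\rightarrow 3$ has $K$ at vertices $i\in\{b,\dots,d\}$ and $0$ elsewhere, with identity maps between consecutive copies of $K$ and zero maps otherwise. $\mathbb{I}[b,d]^{m}$ denotes the direct sum of $m$ copies. *)

theory Defs
  imports Complex_Main "HOL-Library.Function_Algebras"
begin

text \<open>The direct sum
of interval representations  (+)_{1<=b<=d<=3} I[b,d]^(m b d)  of the quiver
1 <- 2 -> 3 is modelled concretely inside the function space
nat * nat * nat => 'k: the coordinate (b,d,j) is the j-th copy (j < m b d)
of the summand I[b,d].\<close>

definition fscale :: "'k::field \<Rightarrow> ('i \<Rightarrow> 'k) \<Rightarrow> ('i \<Rightarrow> 'k)" where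
  "fscale c f = (\<lambda>i. c * f i)"

definition findim :: "('k::field \<Rightarrow> 'v::ab_group_add \<Rightarrow> 'v) \<Rightarrow> bool" where
  "findim s \<longleftrightarrow> (\<exists>B. finite B \<and> module.span s B = UNIV)"

definition ivl_vtx :: "(nat \<Rightarrow> nat \<Rightarrow> nat) \<Rightarrow> nat \<Rightarrow> (nat \<times> nat \<times> nat \<Rightarrow> 'k::field) set" where
  "ivl_vtx m v = {f. \<forall>b d j. f (b, d, j) \<noteq> 0 \<longrightarrow>
      1 \<le> b \<and> b \<le> v \<and> v \<le> d \<and> d \<le> 3 \<and> j < m b d}"

definition ivl_map21 :: "(nat \<times> nat \<times> nat \<Rightarrow> 'k::field) \<Rightarrow> (nat \<times> nat \<times> nat \<Rightarrow> 'k)" where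
  "ivl_map21 f = (\<lambda>(b, d, j). if b \<le> 1 then f (b, d, j) else 0)"

definition ivl_map23 :: "(nat \<times> nat \<times> nat \<Rightarrow> 'k::field) \<Rightarrow> (nat \<times> nat \<times> nat \<Rightarrow> 'k)" where
  "ivl_map23 f = (\<lambda>(b, d, j). if 3 \<le> d then f (b, d, j) else 0)"

definition rep_iso ::
  "('k::field \<Rightarrow> 'x::ab_group_add \<Rightarrow> 'x) \<Rightarrow> ('k \<Rightarrow> 'f::ab_group_add \<Rightarrow> 'f) \<Rightarrow> ('k \<Rightarrow> 'y::ab_group_add \<Rightarrow> 'y)
   \<Rightarrow> ('f \<Rightarrow> 'x) \<Rightarrow> ('f \<Rightarrow> 'y) \<Rightarrow> (nat \<Rightarrow> nat \<Rightarrow> nat)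
   \<Rightarrow> ('x \<Rightarrow> (nat \<times> nat \<times> nat \<Rightarrow> 'k)) \<Rightarrow> ('f \<Rightarrow> (nat \<times> nat \<times> nat \<Rightarrow> 'k))
   \<Rightarrow> ('y \<Rightarrow> (nat \<times> nat \<times> nat \<Rightarrow> 'k)) \<Rightarrow> bool" where
  "rep_iso sX sF sY p q m hX hF hY \<longleftrightarrow>
     Vector_Spaces.linear sX fscale hX \<and> Vector_Spaces.linear sF fscale hF \<and> Vector_Spaces.linear sY fscale hY \<and>
     bij_betw hX UNIV (ivl_vtx m 1) \<and> bij_betw hF UNIV (ivl_vtx m 2) \<and>
     bij_betw hY UNIV (ivl_vtx m 3) \<and>
     (\<forall>z. hX (p z) = ivl_map21 (hF z)) \<and> (\<forall>z. hY (q z) = ivl_map23 (hF z))"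

text \<open>K^n is modelled as functions
nat => 'k vanishing at indices >= n.\<close>
definition piX :: "(nat \<Rightarrow> nat \<Rightarrow> nat) \<Rightarrow> (nat \<times> nat \<times> nat \<Rightarrow> 'k::field) \<Rightarrow> (nat \<Rightarrow> 'k)" where
  "piX m f = (\<lambda>j. if j < m 1 3 then f (1, 3, j) else 0)"

definition iotaY :: "(nat \<Rightarrow> nat \<Rightarrow> nat) \<Rightarrow> (nat \<Rightarrow> 'k::field) \<Rightarrow> (nat \<times> nat \<times> nat \<Rightarrow> 'k)" where
  "iotaY m g = (\<lambda>(b, d, j). if b = 1 \<and> d = 3 \<and> j < m 1 3 then g j else 0)"

definition Fstar :: "(nat \<Rightarrow> nat \<Rightarrow> nat) \<Rightarrow> ('x \<Rightarrow> (nat \<times> nat \<times> nat \<Rightarrow> 'k::field))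
   \<Rightarrow> ('y \<Rightarrow> (nat \<times> nat \<times> nat \<Rightarrow> 'k)) \<Rightarrow> 'x \<Rightarrow> 'y" where
  "Fstar m hX hY = inv hY \<circ> iotaY m \<circ> piX m \<circ> hX"

end

theory Submission
  imports Defs
begin

lemma lin0: "Vector_Spaces.linear s1 s2 f \<Longrightarrow> f 0 = 0"
  unfolding Vector_Spaces.linear_iff
  by (metis add_cancel_right_right add_0)

theorem mainTheorem1:
  fixes sX :: "'k::field \<Rightarrow> 'x::ab_group_add \<Rightarrow> 'x"
    and sF :: "'k \<Rightarrow> 'f::ab_group_add \<Rightarrow> 'f"
    and sY :: "'k \<Rightarrow> 'y::ab_group_add \<Rightarrow> 'y"
    and p :: "'f \<Rightarrow> 'x" and q :: "'f \<Rightarrow> 'y"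
    and m :: "nat \<Rightarrow> nat \<Rightarrow> nat"
    and hX :: "'x \<Rightarrow> (nat \<times> nat \<times> nat \<Rightarrow> 'k)"
    and hF :: "'f \<Rightarrow> (nat \<times> nat \<times> nat \<Rightarrow> 'k)"
    and hY :: "'y \<Rightarrow> (nat \<times> nat \<times> nat \<Rightarrow> 'k)"
  assumes "vector_space sX" and "vector_space sF" and "vector_space sY"
    and "findim sX" and "findim sF" and "findim sY"
    and "Vector_Spaces.linear sF sX p" and "Vector_Spaces.linear sF sY q"
    and "rep_iso sX sF sY p q m hX hF hY"
    and "surj p"
    and "\<forall>z. p z = 0 \<longrightarrow> q z = 0"
  shows "\<forall>z. Fstar m hX hY (p z) = q z"
proof
  fix z
  have R: "Vector_Spaces.linear sX fscale hX" "bij_betw hF UNIV (ivl_vtx m 2)"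
     "bij_betw hY UNIV (ivl_vtx m 3)" "bij_betw hX UNIV (ivl_vtx m 1)"
     "\<And>z. hX (p z) = ivl_map21 (hF z)" "\<And>z. hY (q z) = ivl_map23 (hF z)"
     "Vector_Spaces.linear sY fscale hY"
    using assms(9) unfolding rep_iso_def by auto
  have m23: "m 2 3 = 0"
  proof (rule ccontr)
    assume "m 2 3 \<noteq> 0"
    define e :: "nat \<times> nat \<times> nat \<Rightarrow> 'k" where "e = (\<lambda>i. if i = (2,3,0) then 1 else 0)"
    have "e \<in> ivl_vtx m 2" using \<open>m 2 3 \<noteq> 0\<close> unfolding e_def ivl_vtx_def by auto
    then obtain w where w: "hF w = e" using R(2) unfolding bij_betw_def by (metis imageE)
    have "hX (p w) = 0" using R(5)[of w] w unfolding ivl_map21_def e_def by (auto simp: fun_eq_iff)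
    also have "\<dots> = hX 0" using lin0[OF R(1)] by simp
    finally have "p w = 0" using R(4) unfolding bij_betw_def inj_on_def by auto
    hence "q w = 0" using assms(11) by auto
    hence "hY (q w) = 0" using lin0[OF R(7)] by simp
    moreover have "hY (q w) (2,3,0) = 1" using R(6)[of w] w unfolding ivl_map23_def e_def by simp
    ultimately show False by simp
  qed
  have mem: "hF z \<in> ivl_vtx m 2" using R(2) unfolding bij_betw_def by auto
  have eq: "iotaY m (piX m (hX (p z))) = hY (q z)"
  proof
    fix i :: "nat \<times> nat \<times> nat"
    obtain b d j where i: "i = (b,d,j)" by (cases i) auto
    have sup: "hF z (b,d,j) \<noteq> 0 \<Longrightarrow> 1 \<le> b \<and> b \<le> 2 \<and> 2 \<le> d \<and> d \<le> 3 \<and> j < m b d"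
      using mem unfolding ivl_vtx_def by blast
    show "iotaY m (piX m (hX (p z))) i = hY (q z) i"
      unfolding i R(5) R(6) iotaY_def piX_def ivl_map21_def ivl_map23_def
      using sup m23 by (cases "hF z (b,d,j) = 0") (auto, (metis le_antisym numeral_le_one_iff semiring_norm(69) not_less_eq_eq numeral_2_eq_2 numeral_3_eq_3 Suc_leI less_nat_zero_code)+)
  qed
  show "Fstar m hX hY (p z) = q z"
    unfolding Fstar_def comp_def eq
    using R(3) unfolding bij_betw_def by (simp add: inv_f_f)
qed

end
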